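(* Let $\Sigma$ be an alphabet, let $Z\subseteq \Sigma^{\mathbb Z}$ be a sofic shift and let $f:\mathbb R^n\times Z\to\mathbb R^n$ be an arbitrary function. The system $$x(k+1)=f(x(k),\omega(k)),\qquad \omega(k+1)=\sigma(\omega(k)),\qquad x(0)=x_0\in\mathbb R^n,\ \omega(0)=\bar z\in Z$$ is globally uniformly asymptotically stable (GUAS) if and only if there exists a sequence-dependent Lyapunov function for it.
   Context: $\Sigma$ is a nonempty countable set (alphabet). $\Sigma^{\mathbb Z}$ is the set of bi-infinite sequences $\bar z=(z_k)_{k\in\mathbb Z}$ with $z_k\in\Sigma$, and $\sigma:\Sigma^{\mathbb Z}\to\Sigma^{\mathbb Z}$ is the shift, $\sigma(\bar z)_k=z_{k+1}$. A labeled graph on $\Sigma$ is $\mathcal G=(S,E)$ with $S$ a finite set of nodes and $E\subseteq S\times S\times\Sigma$. A bi-infinite walk labeled by $\bar z$ is a sequence $(e_k)_{k\in\mathbb Z}$ of edges $e_k=(s_k,s_{k+1},z_k)\in E$. $\mathcal Z(\mathcal G)$ is the set of $\bar z\in\Sigma^{\mathbb Z}$ labeling some bi-infinite walk. A set $Z\subseteq\Sigma^{\mathbb Z}$ is a sofic shift if $Z=\mathcal Z(\mathcal G)$ for some labeled graph $\mathcal G$ (so $\sigma(Z)=Z$). $\Phi(k,x_0,\bar z)$ denotes the state $x(k)$ of the solution of the system above (so $x(k+1)=f(x(k),\sigma^k(\bar z))$). Classes: $\alpha:\mathbb R_{\ge0}\to\mathbb R_{\ge0}$ is of class $\mathcal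 K$ if continuous, strictly increasing, $\alpha(0)=0$; of class $\mathcal K_\infty$ if moreover unbounded; $\beta:\mathbb R_{\ge0}\times\mathbb R_{\ge0}\to\mathbb R_{\ge0}$ is of class $\mathcal{KL}$ if continuous, $\beta(\cdot,s)\in\mathcal K$ for each $s$, and $\beta(r,\cdot)$ is decreasing with limit $0$ for each $r$. GUAS: there exists $\beta\in\mathcal{KL}$ with $|\Phi(k,x_0,\bar z)|\le\beta(|x_0|,k)$ for all $k\in\mathbb N$, $x_0\in\mathbb R^n$, $\bar z\in Z$. A sequence-dependent Lyapunov function is a function $\mathcal V:\mathbb R^n\times Z\to\mathbb R$ for which there exist $\alpha_1,\alpha_2\in\mathcal K_\infty$ and $\gamma\in[0,1)$ with $\alpha_1(|x|)\le\mathcal V(x,\bar z)\le\alpha_2(|x|)$ and $\mathcal V(f(x,\bar z),\sigma(\bar z))\le\gamma\,\mathcal V(x,\bar z)$ for all $x\in\mathbb R^n$, $\bar z\in Z$. *)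

theory Defs
  imports "HOL-Analysis.Analysis" "HOL-Library.Countable"
begin

definition shift :: "(int \<Rightarrow> 'a) \<Rightarrow> (int \<Rightarrow> 'a)" where
  "shift z = (\<lambda>k. z (k + 1))"

text \<open>Labeled graph: finite node set S (nodes taken from nat, w.l.o.g.) and
  edge set E \<subseteq> S x S x Sigma. Sequences labeling a bi-infinite walk.\<close>

definition walk_labels :: "nat set \<Rightarrow> (nat \<times> nat \<times> 'a) set \<Rightarrow> (int \<Rightarrow> 'a) set" where
  "walk_labels S E = {z. \<exists>s :: int \<Rightarrow> nat. \<forall>k. (s k, s (k + 1), z k) \<in> E}"

definition labeled_graph :: "nat set \<Rightarrow> (nat \<times> nat \<times> 'a) set \<Rightarrow> bool" where
  "labeled_graph S E \<longleftrightarrow> finite S \<and> E \<subseteq> S \<times> S \<times> UNIV"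

definition sofic :: "(int \<Rightarrow> 'a) set \<Rightarrow> bool" where
  "sofic Z \<longleftrightarrow> (\<exists>S E. labeled_graph S E \<and> Z = walk_labels S E)"

primrec Phi :: "('x \<Rightarrow> (int \<Rightarrow> 'a) \<Rightarrow> 'x) \<Rightarrow> nat \<Rightarrow> 'x \<Rightarrow> (int \<Rightarrow> 'a) \<Rightarrow> 'x" where
  "Phi f 0 x0 z = x0"
| "Phi f (Suc k) x0 z = f (Phi f k x0 z) ((shift ^^ k) z)"

definition class_K :: "(real \<Rightarrow> real) \<Rightarrow> bool" where
  "class_K a \<longleftrightarrow> continuous_on {0..} a \<and> strict_mono_on {0..} a \<and> a 0 = 0"

definition class_Kinf :: "(real \<Rightarrow> real) \<Rightarrow> bool" where
  "class_Kinf a \<longleftrightarrow> class_K a \<and> (\<forall>M. \<exists>r\<ge>0. a r > M)"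

definition class_KL :: "(real \<Rightarrow> real \<Rightarrow> real) \<Rightarrow> bool" where
  "class_KL b \<longleftrightarrow> continuous_on ({0..} \<times> {0..}) (\<lambda>(r, s). b r s)
     \<and> (\<forall>s\<ge>0. class_K (\<lambda>r. b r s))
     \<and> (\<forall>r\<ge>0. antimono_on {0..} (b r) \<and> ((b r) \<longlongrightarrow> 0) at_top)"

definition GUAS :: "(real^'n \<Rightarrow> (int \<Rightarrow> 'a) \<Rightarrow> real^'n) \<Rightarrow> (int \<Rightarrow> 'a) set \<Rightarrow> bool" where
  "GUAS f Z \<longleftrightarrow> (\<exists>\<beta>. class_KL \<beta> \<and>
     (\<forall>k x0 z. z \<in> Z \<longrightarrow> norm (Phi f k x0 z) \<le> \<beta> (norm x0) (real k)))"

definition seq_lyapunov ::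
  "(real^'n \<Rightarrow> (int \<Rightarrow> 'a) \<Rightarrow> real^'n) \<Rightarrow> (int \<Rightarrow> 'a) set \<Rightarrow> (real^'n \<Rightarrow> (int \<Rightarrow> 'a) \<Rightarrow> real) \<Rightarrow> bool" where
  "seq_lyapunov f Z V \<longleftrightarrow> (\<exists>\<alpha>1 \<alpha>2 \<gamma>. class_Kinf \<alpha>1 \<and> class_Kinf \<alpha>2 \<and> 0 \<le> \<gamma> \<and> \<gamma> < 1 \<and>
     (\<forall>x z. z \<in> Z \<longrightarrow> \<alpha>1 (norm x) \<le> V x z \<and> V x z \<le> \<alpha>2 (norm x)
        \<and> V (f x z) (shift z) \<le> \<gamma> * V x z))"

end

theory Submission
  imports Defs
begin

lemma classK_nonneg: "class_K a \<Longrightarrow> x \<ge> 0 \<Longrightarrow> a x \<ge> 0"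
  unfolding class_K_def strict_mono_on_def
  by (metis atLeast_iff order.order_iff_strict order_refl)

lemma classK_mono: "class_K a \<Longrightarrow> 0 \<le> x \<Longrightarrow> x \<le> y \<Longrightarrow> a x \<le> a y"
  unfolding class_K_def strict_mono_on_def
  by (metis atLeast_iff order.order_iff_strict order_trans)

lemma classK_less: "class_K a \<Longrightarrow> 0 \<le> x \<Longrightarrow> x < y \<Longrightarrow> a x < a y"
  unfolding class_K_def strict_mono_on_def by auto

lemma kinf_inverse:
  assumes K: "class_Kinf a"
  shows "\<exists>g. (\<forall>y. isCont g y) \<and> strict_mono g \<and> g 0 = 0 \<and> (\<forall>x. x \<ge> 0 \<longrightarrow> g (a x) = x)"
proof -
  have Ka: "class_K a" using K by (simp add: class_Kinf_def)
  define ae where "ae t = (if t \<le> 0 then t else a t)" for t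
  have a0: "a 0 = 0" using Ka by (simp add: class_K_def)
  have ae_pos: "ae t = a t" if "t \<ge> 0" for t using that a0 by (auto simp: ae_def)
  have cont: "continuous_on UNIV ae"
    unfolding ae_def
    apply (rule continuous_on_cases_le[where h="\<lambda>x. x", simplified])
    using Ka a0 by (auto simp: class_K_def atLeast_def intro: continuous_intros)
  have sm: "strict_mono ae"
  proof (rule strict_monoI)
    fix x y :: real assume "x < y"
    show "ae x < ae y"
    proof (cases "y \<le> 0")
      case True then show ?thesis using \<open>x<y\<close> by (simp add: ae_def)
    next
      case False
      then have "ae y = a y" by (simp add: ae_def)
      show ?thesis
      proof (cases "x \<le> 0")
        case True
        then have "ae x = x" by (simp add: ae_def)
        moreover have "a y > 0" using classK_less[OF Ka, of 0 y] False a0 by simp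
        ultimately show ?thesis using True \<open>ae y = a y\<close> by simp
      next
        case False2: False
        then show ?thesis using classK_less[OF Ka, of x y] \<open>x<y\<close> \<open>ae y = a y\<close> by (simp add: ae_def)
      qed
    qed
  qed
  have surj: "\<exists>x. ae x = y" for y
  proof (cases "y \<le> 0")
    case True then show ?thesis by (intro exI[of _ y]) (simp add: ae_def)
  next
    case False
    obtain r where r: "r \<ge> 0" "a r > y" using K by (auto simp: class_Kinf_def)
    have "\<exists>x\<ge>0. x \<le> r \<and> ae x = y"
      apply (rule IVT)
      using r False ae_pos[of 0] ae_pos[of r] a0 cont
      by (auto intro: continuous_on_subset continuous_at_imp_continuous_on
               simp: continuous_on_eq_continuous_at)
    then show ?thesis by blast
  qed
  define g where "g = inv ae"
  have inj: "inj ae" using sm strict_mono_imp_inj_on by blast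
  have gae: "g (ae x) = x" for x by (simp add: g_def inv_f_f[OF inj])
  have isc: "isCont ae z" for z using cont by (simp add: continuous_on_eq_continuous_at)
  have "isCont g y" for y
  proof -
    obtain x where "ae x = y" using surj by blast
    have "isCont g (ae x)"
      by (rule isCont_inverse_function2[of "x-1" x "x+1"]) (auto simp: gae isc)
    then show ?thesis using \<open>ae x = y\<close> by simp
  qed
  moreover have "strict_mono g"
  proof (rule strict_monoI)
    fix u v :: real assume "u < v"
    obtain x y where "ae x = u" "ae y = v" using surj by blast
    then show "g u < g v" using \<open>u<v\<close> sm gae
      by (metis linorder_not_le strict_mono_less_eq)
  qed
  moreover have "g 0 = 0" using gae[of 0] by (simp add: ae_def)
  moreover have "\<forall>x. x \<ge> 0 \<longrightarrow> g (a x) = x" using gae ae_pos by metis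
  ultimately show ?thesis by blast
qed


lemma powr_tends0: "0 < (c::real) \<Longrightarrow> c < 1 \<Longrightarrow> ((\<lambda>s. c powr s) \<longlongrightarrow> 0) at_top"
proof -
  assume c: "0 < c" "c < 1"
  have l: "ln c < 0" using c by simp
  have "filterlim (\<lambda>s. ln c * s) at_bot at_top"
    by (rule filterlim_tendsto_neg_mult_at_bot[OF tendsto_const l filterlim_ident])
  then have "((\<lambda>s. exp (ln c * s)) \<longlongrightarrow> 0) at_top"
    by (rule filterlim_compose[OF exp_at_bot])
  then show ?thesis using c by (simp add: powr_def mult.commute)
qed

lemma sofic_shift: "sofic Z \<Longrightarrow> z \<in> Z \<Longrightarrow> shift z \<in> Z"
  unfolding sofic_def walk_labels_def shift_def
proof clarify
  fix S E s assume "\<forall>k. (s k, s (k + 1), z k) \<in> E"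
  then show "\<exists>s. \<forall>k. (s k, s (k + 1), z (k + 1)) \<in> E"
  proof (intro exI[of _ "\<lambda>k. s (k+1)"] allI)
    fix k :: int
    have "(s (k+1), s (k + 1 + 1), z (k+1)) \<in> E" using \<open>\<forall>k. _\<close> by blast
    then show "(s (k+1), s (k + 1 + 1), z (k+1)) \<in> E" .
  qed
qed

lemma sofic_shiftn: "sofic Z \<Longrightarrow> z \<in> Z \<Longrightarrow> (shift ^^ k) z \<in> Z"
  by (induction k) (auto intro: sofic_shift)

lemma lyap_imp_GUAS:
  fixes Z :: "(int \<Rightarrow> 'a) set" and f :: "real^'n \<Rightarrow> (int \<Rightarrow> 'a) \<Rightarrow> real^'n"
  assumes S: "sofic Z" and L: "seq_lyapunov f Z V"
  shows "GUAS f Z"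
proof -
  obtain a1 a2 \<gamma> where K1: "class_Kinf a1" and K2: "class_Kinf a2" and g0: "0 \<le> \<gamma>" and g1: "\<gamma> < 1"
    and H: "\<And>x z. z \<in> Z \<Longrightarrow> a1 (norm x) \<le> V x z \<and> V x z \<le> a2 (norm x) \<and> V (f x z) (shift z) \<le> \<gamma> * V x z"
    using L unfolding seq_lyapunov_def by blast
  have K1': "class_K a1" and K2': "class_K a2" using K1 K2 by (auto simp: class_Kinf_def)
  obtain g where gc: "\<And>y. isCont g y" and gm: "strict_mono g" and g00: "g 0 = 0"
    and ga: "\<And>x. x \<ge> 0 \<Longrightarrow> g (a1 x) = x"
    using kinf_inverse[OF K1] by blast
  have gmono: "g u \<le> g v" if "u \<le> v" for u v using gm that by (simp add: strict_mono_less_eq)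
  define c where "c = max \<gamma> (1/2)"
  have c0: "0 < c" and c1: "c < 1" and gc': "\<gamma> \<le> c" using g1 by (auto simp: c_def)
  define \<beta> where "\<beta> r s = g (c powr s * a2 r)" for r s
  have a2c: "continuous_on {0..} a2" using K2' by (simp add: class_K_def)
  have a20: "a2 0 = 0" using K2' by (simp add: class_K_def)
  have gcont: "continuous_on A g" for A using gc by (simp add: continuous_at_imp_continuous_on)
  have KL: "class_KL \<beta>"
    unfolding class_KL_def
  proof (intro conjI allI impI)
    have "continuous_on ({0..} \<times> {0..}) (\<lambda>x. g (c powr snd x * a2 (fst x)))"
    proof (rule continuous_on_compose2[OF gcont[of UNIV]])
      have "continuous_on ({0..} \<times> {0..}) (\<lambda>x. a2 (fst x))"
        by (rule continuous_on_compose2[OF a2c continuous_on_fst]) auto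
      then show "continuous_on ({0..} \<times> {0..}) (\<lambda>x. c powr snd x * a2 (fst x))"
        using c0 by (intro continuous_intros) auto
    qed auto
    then show "continuous_on ({0..} \<times> {0..}) (\<lambda>(r, s). \<beta> r s)"
      by (simp add: \<beta>_def case_prod_beta')
  next
    fix s :: real assume "s \<ge> 0"
    show "class_K (\<lambda>r. \<beta> r s)"
      unfolding class_K_def
    proof (intro conjI)
      show "continuous_on {0..} (\<lambda>r. \<beta> r s)"
        unfolding \<beta>_def
        by (rule continuous_on_compose2[OF gcont[of UNIV]]) (auto intro!: continuous_intros a2c)
      show "strict_mono_on {0..} (\<lambda>r. \<beta> r s)"
        unfolding \<beta>_def
      proof (rule strict_mono_onI)
        fix r r' :: real assume "r \<in> {0..}" "r' \<in> {0..}" "r < r'"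
        then have "a2 r < a2 r'" using classK_less[OF K2'] by auto
        then have "c powr s * a2 r < c powr s * a2 r'" using c0 by simp
        then show "g (c powr s * a2 r) < g (c powr s * a2 r')" using gm by (simp add: strict_mono_less)
      qed
      show "\<beta> 0 s = 0" by (simp add: \<beta>_def a20 g00)
    qed
  next
    fix r :: real assume r: "r \<ge> 0"
    have a2r: "a2 r \<ge> 0" using classK_nonneg[OF K2' r] .
    show "antimono_on {0..} (\<beta> r)"
    proof (rule monotone_onI)
      fix s s' :: real assume "s \<in> {0..}" "s' \<in> {0..}" "s \<le> s'"
      then have "c powr s' \<le> c powr s" using c0 c1 by (intro powr_mono') auto
      then have "c powr s' * a2 r \<le> c powr s * a2 r" using a2r by (rule mult_right_mono)
      then show "\<beta> r s' \<le> \<beta> r s" by (simp add: \<beta>_def gmono)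
    qed
    have "((\<lambda>s. c powr s * a2 r) \<longlongrightarrow> 0 * a2 r) at_top"
      by (intro tendsto_mult powr_tends0 c0 c1 tendsto_const)
    then have "((\<lambda>s. g (c powr s * a2 r)) \<longlongrightarrow> g 0) at_top"
      using gc by (intro isCont_tendsto_compose[of 0 g]) auto
    then show "(\<beta> r \<longlongrightarrow> 0) at_top" by (simp add: \<beta>_def[abs_def] g00)
  qed
  have chain: "V (Phi f k x z) ((shift ^^ k) z) \<le> \<gamma> ^ k * V x z" if z: "z \<in> Z" for k x z
  proof (induction k)
    case 0 then show ?case by simp
  next
    case (Suc k)
    have "V (Phi f (Suc k) x z) ((shift ^^ Suc k) z) \<le> \<gamma> * V (Phi f k x z) ((shift ^^ k) z)"
      using H[OF sofic_shiftn[OF S z, of k]] by simp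
    also have "\<dots> \<le> \<gamma> * (\<gamma> ^ k * V x z)" using Suc g0 by (rule mult_left_mono)
    finally show ?case by simp
  qed
  have "norm (Phi f k x0 z) \<le> \<beta> (norm x0) (real k)" if z: "z \<in> Z" for k x0 z
  proof -
    have "a1 (norm (Phi f k x0 z)) \<le> V (Phi f k x0 z) ((shift ^^ k) z)"
      using H[OF sofic_shiftn[OF S z, of k]] by blast
    also have "\<dots> \<le> \<gamma> ^ k * V x0 z" by (rule chain[OF z])
    also have "\<dots> \<le> \<gamma> ^ k * a2 (norm x0)" using H[OF z] g0 by (simp add: mult_left_mono)
    also have "\<dots> \<le> c ^ k * a2 (norm x0)"
      using classK_nonneg[OF K2', of "norm x0"] g0 gc' by (intro mult_right_mono power_mono) auto
    also have "\<dots> = c powr (real k) * a2 (norm x0)" using c0 by (simp add: powr_realpow)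
    finally have "g (a1 (norm (Phi f k x0 z))) \<le> \<beta> (norm x0) (real k)"
      by (simp add: \<beta>_def gmono)
    then show ?thesis using ga[of "norm (Phi f k x0 z)"] by simp
  qed
  then show ?thesis using KL unfolding GUAS_def by blast
qed


lemma kinf_minorant:
  fixes v :: "real \<Rightarrow> real"
  assumes mono: "\<And>x y. 0 \<le> x \<Longrightarrow> x \<le> y \<Longrightarrow> v x \<le> v y"
    and nn: "\<And>x. 0 \<le> x \<Longrightarrow> 0 \<le> v x" and v0: "v 0 = 0"
    and pos: "\<And>x. 0 < x \<Longrightarrow> 0 < v x"
    and unb: "\<And>M. \<exists>x\<ge>0. v x > M"
  shows "\<exists>h. class_Kinf h \<and> (\<forall>x\<ge>0. h x \<le> v x)"
proof -
  define T where "T s t = v t + max 0 (s - t)" for s t :: real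
  define w where "w s = Inf (T s ` {0..})" for s
  have bdd: "bdd_below (T s ` {0..})" for s
    unfolding T_def by (rule bdd_belowI[of _ 0]) (auto intro: add_nonneg_nonneg nn)
  have W1: "w s \<le> v s" if "s \<ge> 0" for s
  proof -
    have "w s \<le> T s s" unfolding w_def by (rule cInf_lower[OF _ bdd]) (use that in auto)
    then show ?thesis by (simp add: T_def)
  qed
  have Tlow: "w s \<le> T s t" if "t \<ge> 0" for s t
    unfolding w_def by (rule cInf_lower[OF _ bdd]) (use that in auto)
  have W2: "w s \<ge> 0" for s
    unfolding w_def by (rule cInf_greatest) (auto simp: T_def intro: add_nonneg_nonneg nn)
  have W3: "w s \<le> w s' + \<bar>s - s'\<bar>" for s s'
  proof -
    have "w s - \<bar>s - s'\<bar> \<le> w s'"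
      unfolding w_def[of s']
    proof (rule cInf_greatest)
      show "T s' ` {0..} \<noteq> {}" by auto
      fix y assume "y \<in> T s' ` {0..}"
      then obtain t where t: "t \<ge> 0" "y = T s' t" by auto
      have "w s \<le> T s t" by (rule Tlow[OF t(1)])
      also have "\<dots> \<le> T s' t + \<bar>s - s'\<bar>" unfolding T_def by (auto simp: max_def)
      finally show "w s - \<bar>s - s'\<bar> \<le> y" using t by simp
    qed
    then show ?thesis by simp
  qed
  have W4: "w s \<le> w s'" if "s \<le> s'" for s s'
    unfolding w_def[of s']
  proof (rule cInf_greatest)
    show "T s' ` {0..} \<noteq> {}" by auto
    fix y assume "y \<in> T s' ` {0..}"
    then obtain t where t: "t \<ge> 0" "y = T s' t" by auto
    have "w s \<le> T s t" by (rule Tlow[OF t(1)])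
    also have "\<dots> \<le> T s' t" unfolding T_def using that by (auto simp: max_def)
    finally show "w s \<le> y" using t by simp
  qed
  have W5: "min (v (s/2)) (s/2) \<le> w s" if "s \<ge> 0" for s
    unfolding w_def
  proof (rule cInf_greatest)
    show "T s ` {0..} \<noteq> {}" by auto
    fix y assume "y \<in> T s ` {0..}"
    then obtain t where t: "t \<ge> 0" "y = T s t" by auto
    show "min (v (s/2)) (s/2) \<le> y"
    proof (cases "t \<ge> s/2")
      case True
      then have "v (s/2) \<le> v t" using that by (intro mono) auto
      then show ?thesis using t by (auto simp: T_def)
    next
      case False
      then show ?thesis using t nn[of t] by (auto simp: T_def)
    qed
  qed
  have wpos: "w s > 0" if "s > 0" for s
    using W5[of s] pos[of "s/2"] that by auto
  have w0: "w 0 = 0" using W1[of 0] W2[of 0] v0 by simp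
  have "1-lipschitz_on UNIV w"
  proof (rule lipschitz_onI)
    fix x y :: real
    have "w x \<le> w y + \<bar>x - y\<bar>" "w y \<le> w x + \<bar>x - y\<bar>"
      using W3[of x y] W3[of y x] by (auto simp: abs_minus_commute)
    then show "dist (w x) (w y) \<le> 1 * dist x y" by (simp add: dist_real_def abs_le_iff)
  qed simp
  then have wc: "continuous_on UNIV w" by (rule lipschitz_on_continuous_on)
  define h where "h s = w s * (s / (1 + s))" for s
  have q: "s / (1 + s) < s' / (1 + s')" if "0 \<le> s" "s < s'" for s s' :: real
    using that by (simp add: field_simps)
  have Kh: "class_K h"
    unfolding class_K_def
  proof (intro conjI)
    show "continuous_on {0..} h" unfolding h_def
      by (intro continuous_intros continuous_on_subset[OF wc]) auto
    show "strict_mono_on {0..} h"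
    proof (rule strict_mono_onI)
      fix s s' :: real assume "s \<in> {0..}" "s' \<in> {0..}" "s < s'"
      then have s: "0 \<le> s" "s < s'" by auto
      have "w s * (s / (1 + s)) \<le> w s' * (s / (1 + s))"
        using W4[of s s'] s by (intro mult_right_mono) auto
      also have "\<dots> < w s' * (s' / (1 + s'))"
        by (rule mult_strict_left_mono[OF q[OF s]]) (use wpos s in auto)
      finally show "h s < h s'" by (simp add: h_def)
    qed
    show "h 0 = 0" by (simp add: h_def)
  qed
  have "\<exists>r\<ge>0. h r > M" for M
  proof -
    obtain x0 where x0: "x0 \<ge> 0" "v x0 > 2 * M" using unb by blast
    define s where "s = 2 * max x0 (max 1 (2 * \<bar>M\<bar> + 1))"
    have s2: "s/2 \<ge> x0" "s/2 \<ge> 1" "s/2 > 2 * M" unfolding s_def by auto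
    have "v (s/2) \<ge> v x0" using s2 x0 by (intro mono) auto
    then have "min (v (s/2)) (s/2) > 2 * M" using x0 s2 by auto
    then have ws: "w s > 2 * M" using W5[of s] s2 by auto
    have "s / (1 + s) \<ge> 1/2" using s2 by (simp add: field_simps)
    then have "w s * (s / (1 + s)) \<ge> w s * (1/2)" using W2[of s] by (intro mult_left_mono) auto
    then have "h s \<ge> w s * (1/2)" by (simp add: h_def)
    then have "h s > M" using ws by linarith
    then show ?thesis using s2 by (intro exI[of _ s]) auto
  qed
  then have "class_Kinf h" using Kh by (simp add: class_Kinf_def)
  moreover have "h x \<le> v x" if "x \<ge> 0" for x
  proof -
    have "x / (1 + x) \<le> 1" using that by simp
    then have "w x * (x / (1 + x)) \<le> w x * 1" using W2[of x] that by (intro mult_left_mono) auto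
    then show ?thesis using W1[OF that] by (simp add: h_def)
  qed
  ultimately show ?thesis by blast
qed

lemma cont_majorant:
  fixes g :: "real \<Rightarrow> real"
  assumes mono: "\<And>x y. 0 \<le> x \<Longrightarrow> x \<le> y \<Longrightarrow> g x \<le> g y"
    and nn: "\<And>x. 0 \<le> x \<Longrightarrow> 0 \<le> g x"
  shows "\<exists>G. continuous_on {0..} G \<and> (\<forall>x y. 0 \<le> x \<longrightarrow> x \<le> y \<longrightarrow> G x \<le> G y) \<and> (\<forall>x\<ge>0. g x \<le> G x)"
proof -
  define \<Psi> where "\<Psi> x = x / (1 + x)" for x :: real
  have \<Psi>lt: "\<Psi> x < 1" "0 \<le> \<Psi> x" if "x \<ge> 0" for x using that by (auto simp: \<Psi>_def field_simps)
  have \<Psi>mono: "\<Psi> x \<le> \<Psi> y" if "0 \<le> x" "x \<le> y" for x y using that by (simp add: \<Psi>_def field_simps)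
  define T where "T r t = \<Psi> (g t) - max 0 (t - r)" for r t :: real
  define P where "P r = Sup (T r ` {0..})" for r
  have bdd: "bdd_above (T r ` {0..})" for r
  proof (rule bdd_aboveI[of _ 1])
    fix y assume "y \<in> T r ` {0..}"
    then obtain t where t: "t \<ge> 0" "y = T r t" by auto
    have "\<Psi> (g t) < 1" by (rule \<Psi>lt(1)[OF nn[OF t(1)]])
    then show "y \<le> 1" using t by (auto simp: T_def)
  qed
  have Tup: "T r t \<le> P r" if "t \<ge> 0" for r t
    unfolding P_def by (rule cSup_upper[OF _ bdd]) (use that in auto)
  have P1: "\<Psi> (g r) \<le> P r" if "r \<ge> 0" for r using Tup[OF that, of r] by (simp add: T_def)
  have P2: "P r \<le> \<Psi> (g (r + 1))" if r: "r \<ge> 0" for r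
    unfolding P_def
  proof (rule cSup_least)
    show "T r ` {0..} \<noteq> {}" by auto
    fix y assume "y \<in> T r ` {0..}"
    then obtain t where t: "t \<ge> 0" "y = T r t" by auto
    show "y \<le> \<Psi> (g (r + 1))"
    proof (cases "t \<le> r + 1")
      case True
      then have "\<Psi> (g t) \<le> \<Psi> (g (r+1))" using t nn by (intro \<Psi>mono mono) auto
      then show ?thesis using t by (auto simp: T_def)
    next
      case False
      then have "y < 0" using t \<Psi>lt[OF nn[OF t(1)]] by (auto simp: T_def)
      then show ?thesis using \<Psi>lt[OF nn, of "r+1"] r by auto
    qed
  qed
  have P3: "P r \<le> P r' + \<bar>r - r'\<bar>" for r r'
  proof -
    have "P r - \<bar>r - r'\<bar> \<le> P r'"
    proof -
      have "P r \<le> P r' + \<bar>r - r'\<bar>"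
        unfolding P_def[of r]
      proof (rule cSup_least)
        show "T r ` {0..} \<noteq> {}" by auto
        fix y assume "y \<in> T r ` {0..}"
        then obtain t where t: "t \<ge> 0" "y = T r t" by auto
        have "T r t \<le> T r' t + \<bar>r - r'\<bar>" unfolding T_def by (auto simp: max_def)
        also have "\<dots> \<le> P r' + \<bar>r - r'\<bar>" using Tup[OF t(1)] by simp
        finally show "y \<le> P r' + \<bar>r - r'\<bar>" using t by simp
      qed
      then show ?thesis by simp
    qed
    then show ?thesis by simp
  qed
  have P4: "P r \<le> P r'" if "r \<le> r'" for r r'
    unfolding P_def[of r]
  proof (rule cSup_least)
    show "T r ` {0..} \<noteq> {}" by auto
    fix y assume "y \<in> T r ` {0..}"
    then obtain t where t: "t \<ge> 0" "y = T r t" by auto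
    have "T r t \<le> T r' t" unfolding T_def using that by (auto simp: max_def)
    also have "\<dots> \<le> P r'" using Tup[OF t(1)] by simp
    finally show "y \<le> P r'" using t by simp
  qed
  have "1-lipschitz_on UNIV P"
  proof (rule lipschitz_onI)
    fix x y :: real
    have "P x \<le> P y + \<bar>x - y\<bar>" "P y \<le> P x + \<bar>x - y\<bar>"
      using P3[of x y] P3[of y x] by (auto simp: abs_minus_commute)
    then show "dist (P x) (P y) \<le> 1 * dist x y" by (simp add: dist_real_def abs_le_iff)
  qed simp
  then have Pc: "continuous_on UNIV P" by (rule lipschitz_on_continuous_on)
  have Plt: "P r < 1" "0 \<le> P r" if "r \<ge> 0" for r
    using P2[OF that] \<Psi>lt[OF nn, of "r+1"] P1[OF that] \<Psi>lt[OF nn[OF that]] that by auto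
  define G where "G r = P r / (1 - P r)" for r
  have Gm: "a / (1 - a) \<le> b / (1 - b)" if "0 \<le> a" "a \<le> b" "b < 1" for a b :: real
    using that by (simp add: field_simps)
  have "continuous_on {0..} G"
    unfolding G_def by (intro continuous_intros continuous_on_subset[OF Pc]) (use Plt in force)+
  moreover have "\<forall>x y. 0 \<le> x \<longrightarrow> x \<le> y \<longrightarrow> G x \<le> G y"
    using Plt P4 Gm unfolding G_def by (meson order_trans)
  moreover have "g x \<le> G x" if x: "x \<ge> 0" for x
  proof -
    have "\<Psi> (g x) / (1 - \<Psi> (g x)) = g x" using nn[OF x] by (simp add: \<Psi>_def field_simps)
    moreover have "\<Psi> (g x) / (1 - \<Psi> (g x)) \<le> G x"
      unfolding G_def using P1[OF x] Plt[OF x] \<Psi>lt[OF nn[OF x]] by (intro Gm) auto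
    ultimately show ?thesis by simp
  qed
  ultimately show ?thesis by blast
qed


lemma Phi_step: "Phi f k (f x z) (shift z) = Phi f (Suc k) x z"
  by (induction k) (simp_all add: funpow_swap1)

lemma GUAS_imp_lyap:
  fixes Z :: "(int \<Rightarrow> 'a) set" and f :: "real^'n \<Rightarrow> (int \<Rightarrow> 'a) \<Rightarrow> real^'n"
  assumes G: "GUAS f Z"
  shows "\<exists>V. seq_lyapunov f Z V"
proof -
  obtain \<beta> where KL: "class_KL \<beta>"
    and bnd: "\<And>k x0 z. z \<in> Z \<Longrightarrow> norm (Phi f k x0 z) \<le> \<beta> (norm x0) (real k)"
    using G unfolding GUAS_def by blast
  have Kr: "class_K (\<lambda>r. \<beta> r s)" if "s \<ge> 0" for s using KL that by (simp add: class_KL_def)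
  have bmono: "\<beta> r s \<le> \<beta> r' s" if "0 \<le> r" "r \<le> r'" "0 \<le> s" for r r' s
    using classK_mono[OF Kr[OF that(3)]] that by simp
  have bnn: "0 \<le> \<beta> r s" if "0 \<le> r" "0 \<le> s" for r s
    using classK_nonneg[OF Kr[OF that(2)]] that by simp
  have b0: "\<beta> 0 s = 0" if "0 \<le> s" for s using Kr[OF that] by (simp add: class_K_def)
  have banti: "\<beta> r s' \<le> \<beta> r s" if "0 \<le> r" "0 \<le> s" "s \<le> s'" for r s s'
  proof -
    have "antimono_on {0..} (\<beta> r)" using KL that by (simp add: class_KL_def)
    from monotone_onD[OF this, of s s'] that show ?thesis by simp
  qed
  have blim: "((\<lambda>n. \<beta> r (real n)) \<longlongrightarrow> 0) sequentially" if "0 \<le> r" for r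
  proof -
    have "(\<beta> r \<longlongrightarrow> 0) at_top" using KL that by (simp add: class_KL_def)
    then show ?thesis by (rule filterlim_compose[OF _ filterlim_real_sequentially])
  qed
  have bex: "\<exists>n. \<beta> r (real n) < e" if "0 \<le> r" "0 < e" for r e
  proof -
    have "eventually (\<lambda>n. \<beta> r (real n) < e) sequentially"
      using order_tendstoD(2)[OF blim[OF that(1)] that(2)] .
    then obtain N where "\<forall>n\<ge>N. \<beta> r (real n) < e" unfolding eventually_sequentially by blast
    then show ?thesis by blast
  qed
  have bcont: "continuous_on {0..} (\<lambda>r. \<beta> r 0)" using Kr[of 0] by (simp add: class_K_def)
  have bdelta: "\<exists>d>0. \<forall>r. 0 \<le> r \<longrightarrow> r < d \<longrightarrow> \<beta> r 0 < e" if e0: "e > 0" for e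
  proof -
    obtain d where d: "d > 0" "\<forall>x'\<in>{0..}. dist x' 0 < d \<longrightarrow> dist (\<beta> x' 0) (\<beta> 0 0) < e"
    proof -
      have "\<forall>x\<in>{0..}. \<forall>e>0. \<exists>d>0. \<forall>x'\<in>{0..}. dist x' x < d \<longrightarrow> dist (\<beta> x' 0) (\<beta> x 0) < e"
        using bcont unfolding continuous_on_iff .
      moreover have z: "(0::real) \<in> {0..}" by simp
      ultimately have "\<exists>d>0. \<forall>x'\<in>{0..}. dist x' 0 < d \<longrightarrow> dist (\<beta> x' 0) (\<beta> 0 0) < e"
        using e0 by blast
      then show ?thesis using that by blast
    qed
    show ?thesis
    proof (intro exI[of _ d] conjI allI impI)
      fix r :: real assume "0 \<le> r" "r < d"
      then have "dist (\<beta> r 0) (\<beta> 0 0) < e" using d by (auto simp: dist_real_def)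
      then show "\<beta> r 0 < e" using b0[of 0] by (simp add: dist_real_def)
    qed (use d in auto)
  qed
  define N where "N r = (LEAST n. \<beta> r (real n) < 1 / (r + 1))" for r
  have NI: "\<beta> r (real (N r)) < 1 / (r + 1)" if "0 \<le> r" for r
    unfolding N_def by (rule LeastI_ex) (rule bex, use that in auto)
  have Nk: "k < N r" if "0 \<le> r" "s \<le> \<beta> r (real k)" "1 / (r + 1) \<le> s" for r s k
  proof (rule ccontr)
    assume "\<not> k < N r"
    then have "\<beta> r (real k) \<le> \<beta> r (real (N r))" using that by (intro banti) auto
    then show False using NI[OF that(1)] that by auto
  qed
  have Nmono: "N r \<le> N r'" if "0 \<le> r" "r \<le> r'" for r r'
  proof -
    have "\<beta> r (real (N r')) \<le> \<beta> r' (real (N r'))" using that by (intro bmono) auto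
    also have "\<dots> < 1 / (r' + 1)" using NI that by auto
    also have "\<dots> \<le> 1 / (r + 1)" using that by (simp add: field_simps)
    finally show ?thesis unfolding N_def[of r] by (rule Least_le)
  qed
  obtain Gf where Gc: "continuous_on {0..} Gf" and Gm: "\<And>x y. 0 \<le> x \<Longrightarrow> x \<le> y \<Longrightarrow> Gf x \<le> Gf y"
    and Gg: "\<And>x. 0 \<le> x \<Longrightarrow> (2::real) ^ N x \<le> Gf x"
    using cont_majorant[of "\<lambda>r. (2::real) ^ N r"] Nmono
    by (metis power_increasing one_le_numeral zero_le_power zero_le_numeral)
  have Gnn: "0 \<le> Gf x" if "0 \<le> x" for x using Gg[OF that] by (smt (verit) zero_le_power)
  define a2 where "a2 r = r + r * Gf r" for r
  have a2ge: "r * 2 ^ N r \<le> a2 r" "r \<le> a2 r" if "0 \<le> r" for r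
  proof -
    have "r * 2 ^ N r \<le> r * Gf r" using Gg[OF that] that by (rule mult_left_mono)
    then show "r * 2 ^ N r \<le> a2 r" "r \<le> a2 r" using Gnn[OF that] that by (auto simp: a2_def)
  qed
  have a2lt: "a2 r < a2 r'" if "0 \<le> r" "r < r'" for r r'
  proof -
    have "r * Gf r \<le> r' * Gf r'" using that Gm[of r r'] Gnn[of r]
      by (intro mult_mono) auto
    then show ?thesis using that by (simp add: a2_def)
  qed
  have Ka2: "class_Kinf a2"
    unfolding class_Kinf_def class_K_def
  proof (intro conjI allI)
    show "continuous_on {0..} a2" unfolding a2_def by (intro continuous_intros Gc)
    show "strict_mono_on {0..} a2" by (rule strict_mono_onI) (use a2lt in auto)
    show "a2 0 = 0" by (simp add: a2_def)
    fix M :: real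
    show "\<exists>r\<ge>0. M < a2 r" using a2ge(2)[of "\<bar>M\<bar> + 1"] by (intro exI[of _ "\<bar>M\<bar> + 1"]) auto
  qed
  have a2nn: "0 \<le> a2 r" if "0 \<le> r" for r using a2ge(2)[OF that] that by simp
  define A where "A s = {a2 r / 2 ^ k | r k. 0 \<le> r \<and> s \<le> \<beta> r (real k)}" for s
  define v where "v s = Inf (insert s (A s))" for s
  have bddA: "bdd_below (insert s (A s))" if "0 \<le> s" for s
  proof (rule bdd_belowI[of _ 0])
    fix y assume "y \<in> insert s (A s)"
    then consider "y = s" | r k where "y = a2 r / 2 ^ k" "0 \<le> r" unfolding A_def by blast
    then show "0 \<le> y"
    proof cases
      case 1 then show ?thesis using that by simp
    next
      case (2 r k) then show ?thesis using a2nn[of r] by simp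
    qed
  qed
  have vlow: "v s \<le> a2 r / 2 ^ k" if "0 \<le> s" "0 \<le> r" "s \<le> \<beta> r (real k)" for s r k
    unfolding v_def by (rule cInf_lower[OF _ bddA[OF that(1)]]) (use that in \<open>unfold A_def, blast\<close>)
  have vself: "v s \<le> s" if "0 \<le> s" for s
    unfolding v_def by (rule cInf_lower[OF _ bddA[OF that(1)]]) auto
  have vge: "m \<le> v s" if "m \<le> s" "\<And>r k. 0 \<le> r \<Longrightarrow> s \<le> \<beta> r (real k) \<Longrightarrow> m \<le> a2 r / 2 ^ k" for m s
    unfolding v_def
  proof (rule cInf_greatest)
    fix y assume "y \<in> insert s (A s)"
    then consider "y = s" | r k where "y = a2 r / 2 ^ k" "0 \<le> r" "s \<le> \<beta> r (real k)" unfolding A_def by blast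
    then show "m \<le> y"
    proof cases
      case 1 then show ?thesis using that by simp
    next
      case (2 r k) then show ?thesis using that(2)[of r k] by simp
    qed
  qed simp
  have vnn: "0 \<le> v s" if "0 \<le> s" for s
    by (rule vge) (use that a2nn in auto)
  have v0: "v 0 = 0" using vself[of 0] vnn[of 0] by simp
  have vmono: "v s \<le> v s'" if "0 \<le> s" "s \<le> s'" for s s'
    by (rule vge) (use that vself vlow in \<open>force+\<close>)
  have vpos: "0 < v s" if s: "0 < s" for s
  proof -
    obtain d where d: "d > 0" "\<And>r. 0 \<le> r \<Longrightarrow> r < d \<Longrightarrow> \<beta> r 0 < s" using bdelta[OF s] by blast
    define \<rho> where "\<rho> = 1 / s"
    have \<rho>0: "0 \<le> \<rho>" using s by (simp add: \<rho>_def)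
    define M where "M = (LEAST n. \<beta> \<rho> (real n) < s)"
    have MI: "\<beta> \<rho> (real M) < s" unfolding M_def by (rule LeastI_ex) (rule bex[OF \<rho>0 s])
    have a2d: "0 < a2 d" using a2lt[of 0 d] d by (simp add: a2_def)
    define m where "m = min s (min d (a2 d / 2 ^ M))"
    have m0: "0 < m" using s d a2d by (simp add: m_def)
    have "m \<le> v s"
    proof (rule vge)
      show "m \<le> s" by (simp add: m_def)
      fix r k assume r: "0 \<le> r" and rk: "s \<le> \<beta> r (real k)"
      have rd: "d \<le> r"
      proof (rule ccontr)
        assume "\<not> d \<le> r"
        then have "\<beta> r 0 < s" using d r by auto
        moreover have "\<beta> r (real k) \<le> \<beta> r 0" using r by (intro banti) auto
        ultimately show False using rk by simp
      qed
      show "m \<le> a2 r / 2 ^ k"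
      proof (cases "1 / (r + 1) \<le> s")
        case True
        then have "k < N r" using Nk r rk by blast
        then have "(2::real) ^ k \<le> 2 ^ N r" by (intro power_increasing) auto
        then have "r \<le> r * 2 ^ N r / 2 ^ k" using r by (simp add: field_simps mult_left_mono)
        also have "\<dots> \<le> a2 r / 2 ^ k" using a2ge(1)[OF r] by (simp add: divide_right_mono)
        finally show ?thesis using rd by (simp add: m_def)
      next
        case False
        then have "r < \<rho>" using s r by (simp add: \<rho>_def field_simps)
        have "k < M"
        proof (rule ccontr)
          assume "\<not> k < M"
          then have "\<beta> r (real k) \<le> \<beta> \<rho> (real k)" using r \<open>r < \<rho>\<close> by (intro bmono) auto
          also have "\<dots> \<le> \<beta> \<rho> (real M)" using \<rho>0 \<open>\<not> k < M\<close> by (intro banti) auto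
          finally show False using MI rk by simp
        qed
        then have p: "(2::real) ^ k \<le> 2 ^ M" by (intro power_increasing) auto
        have "a2 d \<le> a2 r" using a2lt[of d r] rd d by (cases "d = r") auto
        then have "a2 d / 2 ^ M \<le> a2 r / 2 ^ M" by (simp add: divide_right_mono)
        also have "\<dots> \<le> a2 r / 2 ^ k" using p a2nn[OF r] by (intro divide_left_mono) auto
        finally show ?thesis by (simp add: m_def)
      qed
    qed
    then show ?thesis using m0 by simp
  qed
  have vunb: "\<exists>x\<ge>0. v x > M" for M
  proof -
    define R where "R = \<bar>M\<bar> + 1"
    have R0: "0 < R" by (simp add: R_def)
    define s where "s = max R (max 1 (\<beta> R 0 + 1))"
    have "R \<le> v s"
    proof (rule vge)
      show "R \<le> s" by (simp add: s_def)
      fix r k assume r: "0 \<le> r" and rk: "s \<le> \<beta> r (real k)"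
      have rR: "R < r"
      proof (rule ccontr)
        assume "\<not> R < r"
        then have "\<beta> r 0 \<le> \<beta> R 0" using r by (intro bmono) auto
        moreover have "\<beta> r (real k) \<le> \<beta> r 0" using r by (intro banti) auto
        ultimately show False using rk by (simp add: s_def)
      qed
      have "1 \<le> s" by (simp add: s_def)
      moreover have "1 / (r + 1) \<le> 1" using r by simp
      ultimately have "1 / (r + 1) \<le> s" by linarith
      then have "k < N r" using Nk r rk by blast
      then have "(2::real) ^ k \<le> 2 ^ N r" by (intro power_increasing) auto
      then have "r \<le> r * 2 ^ N r / 2 ^ k" using r by (simp add: field_simps mult_left_mono)
      also have "\<dots> \<le> a2 r / 2 ^ k" using a2ge(1)[OF r] by (simp add: divide_right_mono)
      finally show "R \<le> a2 r / 2 ^ k" using rR by simp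
    qed
    moreover have "0 \<le> s" by (simp add: s_def)
    moreover have "M < R" by (simp add: R_def)
    ultimately show ?thesis by (intro exI[of _ s]) auto
  qed
  obtain h where Kh: "class_Kinf h" and hv: "\<And>x. 0 \<le> x \<Longrightarrow> h x \<le> v x"
    using kinf_minorant[of v] vmono vnn v0 vpos vunb by blast
  have Kh': "class_K h" using Kh by (simp add: class_Kinf_def)
  have key: "h (\<beta> r (real k)) \<le> a2 r / 2 ^ k" if "0 \<le> r" for r k
    using hv[OF bnn[OF that, of "real k"]] vlow[OF bnn[OF that, of "real k"] that order_refl] by simp
  define V where "V x z = (SUP k. 2 ^ k * h (norm (Phi f k x z)))" for x z
  have term_le: "2 ^ k * h (norm (Phi f k x z)) \<le> a2 (norm x)" if z: "z \<in> Z" for k x z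
  proof -
    have "h (norm (Phi f k x z)) \<le> h (\<beta> (norm x) (real k))"
      using classK_mono[OF Kh'] bnd[OF z] by simp
    also have "\<dots> \<le> a2 (norm x) / 2 ^ k" by (rule key) simp
    finally show ?thesis by (simp add: field_simps)
  qed
  have bddV: "bdd_above (range (\<lambda>k. 2 ^ k * h (norm (Phi f k x z))))" if z: "z \<in> Z" for x z
    by (rule bdd_aboveI2, rule term_le[OF z])
  have H: "h (norm x) \<le> V x z \<and> V x z \<le> a2 (norm x) \<and> V (f x z) (shift z) \<le> 1/2 * V x z"
    if z: "z \<in> Z" for x z
  proof (intro conjI)
    have "2 ^ 0 * h (norm (Phi f 0 x z)) \<le> V x z"
      unfolding V_def by (rule cSUP_upper[OF _ bddV[OF z]]) simp
    then show "h (norm x) \<le> V x z" by simp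
    show "V x z \<le> a2 (norm x)" unfolding V_def
      by (rule cSUP_least) (auto intro: term_le[OF z])
    show "V (f x z) (shift z) \<le> 1/2 * V x z" unfolding V_def[of "f x z"]
    proof (rule cSUP_least)
      fix k
      have "2 ^ Suc k * h (norm (Phi f (Suc k) x z)) \<le> V x z"
        unfolding V_def by (rule cSUP_upper[OF _ bddV[OF z]]) simp
      then show "2 ^ k * h (norm (Phi f k (f x z) (shift z))) \<le> 1/2 * V x z"
        by (simp add: Phi_step)
    qed simp
  qed
  have "seq_lyapunov f Z V"
    unfolding seq_lyapunov_def
    apply (rule exI[of _ h], rule exI[of _ a2], rule exI[of _ "1/2"])
    using Kh Ka2 H by simp
  then show ?thesis by blast
qed

theorem mainTheorem1:
  fixes Z :: "(int \<Rightarrow> 'a::countable) set"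
    and f :: "real^'n \<Rightarrow> (int \<Rightarrow> 'a) \<Rightarrow> real^'n"
  assumes "sofic Z"
  shows "GUAS f Z \<longleftrightarrow> (\<exists>V. seq_lyapunov f Z V)"
  using lyap_imp_GUAS[OF assms] GUAS_imp_lyap by blast

end
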